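(* Let $M$ be a closed, connected, oriented smooth $4m$-manifold and $\Phi\colon H^*(M;\mathbb R)\to\wedge^*\mathbb R^{4m}$ an injective homomorphism of graded algebras (cup product to exterior product) whose image is closed under the Euclidean Clifford product $\cdot$ of $\wedge^*\mathbb R^{4m}$. Let $\Lambda_{2m}=\Phi(H^{2m}(M;\mathbb R))$. Then $\Lambda_{2m}$ is closed under the Hodge star $*$ of $\wedge^{2m}\mathbb R^{4m}$, so $\Lambda_{2m}=\Lambda^+_{2m}\oplus\Lambda^-_{2m}$ with $\Lambda^\pm_{2m}$ the $\pm1$-eigenspaces of $*$ in $\Lambda_{2m}$; and the map $P\colon\wedge^{2m}\mathbb R^{4m}\times\wedge^{2m}\mathbb R^{4m}\to\wedge^{2m}\mathbb R^{4m}$, $P(v,v')=\langle v\cdot v'\rangle_{2m}$, satisfies $P(\Lambda^+_{2m}\times\Lambda^+_{2m})\subset\Lambda^+_{2m}$ and $P(\Lambda^-_{2m}\times\Lambda^-_{2m})\subset\Lambda^-_{2m}$.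
   Context: The Euclidean Clifford product on $\wedge^*\mathbb R^{N}$: the Clifford algebra of $(\mathbb R^N,\text{standard inner product})$ identified with $\wedge^*\mathbb R^N$ via $e_{i_1}\cdots e_{i_k}\leftrightarrow e_{i_1}\wedge\dots\wedge e_{i_k}$ ($i_1<\dots<i_k$), with $e_i\cdot e_i=1$ and $e_i\cdot e_j=-e_j\cdot e_i$ for $i\ne j$. $\langle\xi\rangle_k$ denotes the degree-$k$ component. *)

theory Defs
  imports "HOL-Analysis.Analysis"
begin

text \<open>A multivector in the exterior algebra of R^n (basis e_0,...,e_{n-1}) is a
coefficient function on index sets: x S is the coefficient of the basis blade
e_{i_1} wedge ... wedge e_{i_k}, where S = {i_1 < ... < i_k}.\<close>

type_synonym mvec = "nat set \<Rightarrow> real"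

definition is_mvec :: "nat \<Rightarrow> mvec \<Rightarrow> bool" where
  "is_mvec n x \<longleftrightarrow> (\<forall>S. x S \<noteq> 0 \<longrightarrow> S \<subseteq> {..<n})"

text \<open>Sign of reordering the concatenation e_S e_T into increasing order
(number of inversions i in S, j in T with j < i).\<close>
definition cl_sign :: "nat set \<Rightarrow> nat set \<Rightarrow> real" where
  "cl_sign S T = (-1) ^ card {(i, j). i \<in> S \<and> j \<in> T \<and> j < i}"

text \<open>Euclidean Clifford product: e_S . e_T = cl_sign S T e_{S symdiff T}
(from e_i e_i = 1 and e_i e_j = - e_j e_i for i \<noteq> j).\<close>
definition clifford :: "nat \<Rightarrow> mvec \<Rightarrow> mvec \<Rightarrow> mvec" where
  "clifford n x y = (\<lambda>U. if U \<subseteq> {..<n}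
      then (\<Sum>S\<in>Pow {..<n}. cl_sign S ((S - U) \<union> (U - S)) * x S * y ((S - U) \<union> (U - S)))
      else 0)"

text \<open>Exterior (wedge) product: e_S wedge e_T = cl_sign S T e_{S union T} if S, T disjoint, else 0.\<close>
definition wedge :: "nat \<Rightarrow> mvec \<Rightarrow> mvec \<Rightarrow> mvec" where
  "wedge n x y = (\<lambda>U. if U \<subseteq> {..<n}
      then (\<Sum>S\<in>Pow U. cl_sign S (U - S) * x S * y (U - S))
      else 0)"

definition mv_one :: mvec where
  "mv_one = (\<lambda>S. if S = {} then 1 else 0)"

definition grade :: "nat \<Rightarrow> mvec \<Rightarrow> mvec" where
  "grade k x = (\<lambda>S. if card S = k then x S else 0)"

definition homogeneous :: "nat \<Rightarrow> nat \<Rightarrow> mvec \<Rightarrow> bool" where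
  "homogeneous n k x \<longleftrightarrow> is_mvec n x \<and> (\<forall>S. x S \<noteq> 0 \<longrightarrow> card S = k)"

text \<open>Euclidean Hodge star on the exterior algebra of R^n (standard orientation
e_0 wedge ... wedge e_{n-1}), characterised by a wedge (star b) = <a,b> vol:
star e_S = cl_sign S S^c e_{S^c}.\<close>
definition hodge :: "nat \<Rightarrow> mvec \<Rightarrow> mvec" where
  "hodge n x = (\<lambda>U. if U \<subseteq> {..<n}
      then cl_sign ({..<n} - U) U * x ({..<n} - U) else 0)"

text \<open>We model
H^*(M;R) abstractly by a real algebra 'h with grading Hk k (the subspace
H^k(M;R)), recording the standard algebraic properties of the real cohomology
of a closed, connected, oriented n-manifold: finite-dimensional graded pieces,
vanishing above n, direct sum decomposition, graded-commutative cup product,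
H^0 = R (connected), H^n one-dimensional (closed + oriented), and Poincare
duality (nondegenerate cup pairing H^k x H^{n-k} -> H^n).\<close>

definition closed_oriented_manifold_cohomology ::
  "nat \<Rightarrow> (nat \<Rightarrow> 'h::real_algebra_1 set) \<Rightarrow> bool" where
  "closed_oriented_manifold_cohomology n Hk \<longleftrightarrow>
     (\<forall>k. subspace (Hk k)) \<and>
     (\<forall>k. \<exists>B. finite B \<and> span B = Hk k) \<and>
     (\<forall>k>n. Hk k = {0}) \<and>
     (\<forall>h. \<exists>c. (\<forall>k. c k \<in> Hk k) \<and> h = (\<Sum>k\<le>n. c k)) \<and>
     (\<forall>c. (\<forall>k. c k \<in> Hk k) \<and> (\<Sum>k\<le>n. c k) = 0 \<longrightarrow> (\<forall>k\<le>n. c k = 0)) \<and>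
     (\<forall>k l a b. a \<in> Hk k \<longrightarrow> b \<in> Hk l \<longrightarrow> a * b \<in> Hk (k + l)) \<and>
     (\<forall>k l a b. a \<in> Hk k \<longrightarrow> b \<in> Hk l \<longrightarrow> a * b = ((-1) ^ (k * l)) *\<^sub>R (b * a)) \<and>
     Hk 0 = range of_real \<and>
     dim (Hk n) = 1 \<and>
     (\<forall>k\<le>n. \<forall>a\<in>Hk k. a \<noteq> 0 \<longrightarrow> (\<exists>b\<in>Hk (n - k). a * b \<noteq> 0))"

definition graded_alg_embedding ::
  "nat \<Rightarrow> (nat \<Rightarrow> 'h::real_algebra_1 set) \<Rightarrow> ('h \<Rightarrow> mvec) \<Rightarrow> bool" where
  "graded_alg_embedding n Hk \<Phi> \<longleftrightarrow>
     (\<forall>a b. \<Phi> (a + b) = (\<lambda>S. \<Phi> a S + \<Phi> b S)) \<and>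
     (\<forall>r a. \<Phi> (r *\<^sub>R a) = (\<lambda>S. r * \<Phi> a S)) \<and>
     inj \<Phi> \<and>
     (\<forall>a b. \<Phi> (a * b) = wedge n (\<Phi> a) (\<Phi> b)) \<and>
     \<Phi> 1 = mv_one \<and>
     (\<forall>k. \<forall>a\<in>Hk k. homogeneous n k (\<Phi> a))"

end

theory Submission
  imports Defs
begin

definition ninv :: "nat set \<Rightarrow> nat set \<Rightarrow> nat" where
  "ninv A B = card {(i, j). i \<in> A \<and> j \<in> B \<and> j < i}"

lemma cl_sign_ninv: "cl_sign S T = (-1) ^ ninv S T"
  by (simp add: cl_sign_def ninv_def)

lemma fin_pairs: "finite A \<Longrightarrow> finite B \<Longrightarrow> finite {(i, j). i \<in> A \<and> j \<in> B \<and> P i j}"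
  by (rule finite_subset[of _ "A \<times> B"]) auto

lemma ninv_Un1:
  assumes "finite A" "finite A'" "finite B" "A \<inter> A' = {}"
  shows "ninv (A \<union> A') B = ninv A B + ninv A' B"
proof -
  have "{(i, j). i \<in> A \<union> A' \<and> j \<in> B \<and> j < i} =
        {(i, j). i \<in> A \<and> j \<in> B \<and> j < i} \<union> {(i, j). i \<in> A' \<and> j \<in> B \<and> j < i}" by auto
  moreover have "{(i, j). i \<in> A \<and> j \<in> B \<and> j < i} \<inter> {(i, j). i \<in> A' \<and> j \<in> B \<and> j < i} = {}"
    using assms(4) by auto
  ultimately show ?thesis unfolding ninv_def
    by (simp add: card_Un_disjoint fin_pairs assms)
qed

lemma ninv_Un2:
  assumes "finite A" "finite B" "finite B'" "B \<inter> B' = {}"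
  shows "ninv A (B \<union> B') = ninv A B + ninv A B'"
proof -
  have "{(i, j). i \<in> A \<and> j \<in> B \<union> B' \<and> j < i} =
        {(i, j). i \<in> A \<and> j \<in> B \<and> j < i} \<union> {(i, j). i \<in> A \<and> j \<in> B' \<and> j < i}" by auto
  moreover have "{(i, j). i \<in> A \<and> j \<in> B \<and> j < i} \<inter> {(i, j). i \<in> A \<and> j \<in> B' \<and> j < i} = {}"
    using assms(4) by auto
  ultimately show ?thesis unfolding ninv_def
    by (simp add: card_Un_disjoint fin_pairs assms)
qed

lemma ninv_pair:
  assumes "finite A" "finite B"
  shows "ninv A B + ninv B A + card (A \<inter> B) = card A * card B"
proof -
  define P1 where "P1 = {(i, j). i \<in> A \<and> j \<in> B \<and> j < i}"
  define P2 where "P2 = {(i, j). i \<in> A \<and> j \<in> B \<and> i < j}"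
  define P3 where "P3 = {(i, j). i \<in> A \<and> j \<in> B \<and> i = j}"
  have fin: "finite P1" "finite P2" "finite P3" unfolding P1_def P2_def P3_def
    using fin_pairs assms by auto
  have AB: "A \<times> B = P1 \<union> P2 \<union> P3" unfolding P1_def P2_def P3_def by auto
  have "card (A \<times> B) = card P1 + card P2 + card P3"
  proof -
    have "card (P1 \<union> P2 \<union> P3) = card (P1 \<union> P2) + card P3"
      by (rule card_Un_disjoint) (use fin in \<open>auto simp: P1_def P2_def P3_def\<close>)
    also have "card (P1 \<union> P2) = card P1 + card P2"
      by (rule card_Un_disjoint) (use fin in \<open>auto simp: P1_def P2_def P3_def\<close>)
    finally show ?thesis unfolding AB .
  qed
  moreover have "card P1 = ninv A B" unfolding P1_def ninv_def ..
  moreover have "P2 = prod.swap ` {(i, j). i \<in> B \<and> j \<in> A \<and> j < i}"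
    unfolding P2_def by force
  hence "card P2 = ninv B A" unfolding ninv_def
    by (simp add: card_image)
  moreover have "P3 = (\<lambda>i. (i, i)) ` (A \<inter> B)" unfolding P3_def by auto
  hence "card P3 = card (A \<inter> B)" by (simp add: card_image inj_on_def)
  ultimately show ?thesis by (simp add: card_cartesian_product)
qed

lemma neg1_eq: "even (L + R) \<Longrightarrow> (-1::real) ^ L = (-1) ^ R"
  by (simp add: minus_one_power_iff)

lemma sign_key:
  assumes N: "finite N" and SN: "S \<subseteq> N" and TN: "T \<subseteq> N"
    and c1: "card S = card T" and c2: "card ((S - T) \<union> (T - S)) = card S"
  shows "cl_sign ((S - T) \<union> (T - S)) (N - ((S - T) \<union> (T - S))) * cl_sign S T
       = cl_sign S (N - T) * cl_sign T (N - T)"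
proof -
  define a where "a = S - T"
  define b where "b = S \<inter> T"
  define c where "c = T - S"
  define d where "d = N - (S \<union> T)"
  have fS: "finite S" "finite T" using N SN TN finite_subset by auto
  have fa: "finite a" "finite b" "finite c" "finite d" unfolding a_def b_def c_def d_def
    using fS N by auto
  have e1: "(S - T) \<union> (T - S) = a \<union> c" unfolding a_def c_def by auto
  have e2: "N - ((S - T) \<union> (T - S)) = b \<union> d" unfolding b_def d_def using SN TN by auto
  have e2': "N - (a \<union> c) = b \<union> d" using e1 e2 by simp
  have e3: "S = a \<union> b" "T = b \<union> c" unfolding a_def b_def c_def by auto
  have e4: "N - T = a \<union> d" unfolding a_def d_def using SN TN by auto
  have dj: "a \<inter> b = {}" "a \<inter> c = {}" "a \<inter> d = {}" "b \<inter> c = {}" "b \<inter> d = {}" "c \<inter> d = {}"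
    unfolding a_def b_def c_def d_def by auto
  have ca: "card S = card a + card b" "card T = card b + card c"
    unfolding e3 using fa dj by (auto simp: card_Un_disjoint)
  have ca3: "card ((S - T) \<union> (T - S)) = card a + card c"
    unfolding e1 using fa dj by (auto simp: card_Un_disjoint)
  have cab: "card a = card b" "card c = card b" using ca c1 c2 ca3 by linarith+
  have L1: "ninv (a \<union> c) (b \<union> d) = ninv a b + ninv a d + ninv c b + ninv c d"
    using fa dj by (simp add: ninv_Un1 ninv_Un2)
  have L2: "ninv (a \<union> b) (b \<union> c) = ninv a b + ninv a c + ninv b b + ninv b c"
    using fa dj by (simp add: ninv_Un1 ninv_Un2)
  have R1: "ninv (a \<union> b) (a \<union> d) = ninv a a + ninv a d + ninv b a + ninv b d"
    using fa dj by (simp add: ninv_Un1 ninv_Un2 Int_commute)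
  have R2: "ninv (b \<union> c) (a \<union> d) = ninv b a + ninv b d + ninv c a + ninv c d"
    using fa dj by (simp add: ninv_Un1 ninv_Un2 Int_commute)
  have p1: "ninv a c + ninv c a = card b * card b"
    using ninv_pair[OF fa(1) fa(3)] dj cab by simp
  have p2: "ninv b c + ninv c b = card b * card b"
    using ninv_pair[OF fa(2) fa(3)] dj cab by simp
  have paa: "2 * ninv a a + card a = card a * card a"
    using ninv_pair[OF fa(1) fa(1)] by simp
  have pbb: "2 * ninv b b + card b = card b * card b"
    using ninv_pair[OF fa(2) fa(2)] by simp
  have aabb: "ninv a a = ninv b b" using paa pbb cab by simp
  have ev: "even ((ninv (a \<union> c) (b \<union> d) + ninv (a \<union> b) (b \<union> c)) +
                 (ninv (a \<union> b) (a \<union> d) + ninv (b \<union> c) (a \<union> d)))"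
    unfolding L1 L2 R1 R2 using p1 p2 aabb by presburger
  show ?thesis
    unfolding e1 e2' e4 unfolding e3 cl_sign_ninv power_add[symmetric]
    using ev neg1_eq by blast
qed

lemma key:
  assumes hv: "homogeneous (4*m) (2*m) v" and hw: "homogeneous (4*m) (2*m) w"
  shows "hodge (4*m) (grade (2*m) (clifford (4*m) v w))
       = grade (2*m) (clifford (4*m) v (hodge (4*m) w))"
proof (rule ext)
  fix U
  define N where "N = {..<4*m}"
  have fN: "finite N" and cN: "card N = 4*m" unfolding N_def by auto
  show "hodge (4*m) (grade (2*m) (clifford (4*m) v w)) U
       = grade (2*m) (clifford (4*m) v (hodge (4*m) w)) U"
  proof (cases "U \<subseteq> N")
    case False then show ?thesis by (simp add: hodge_def grade_def clifford_def N_def)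
  next
    case UN: True
    have cNU: "card (N - U) = 4*m - card U" using UN fN cN by (simp add: card_Diff_subset finite_subset)
    have NU: "N - U \<subseteq> N" by auto
    show ?thesis
    proof (cases "card U = 2*m")
      case False
      then have "card (N - U) \<noteq> 2*m" using cNU card_mono[OF fN UN] cN by linarith
      then show ?thesis using False UN NU unfolding N_def by (simp add: hodge_def grade_def)
    next
      case True
      have c2: "card (N - U) = 2*m" using cNU True by simp
      have L: "hodge (4*m) (grade (2*m) (clifford (4*m) v w)) U
        = cl_sign (N - U) U * (\<Sum>S\<in>Pow N. cl_sign S ((S - (N - U)) \<union> ((N - U) - S)) * v S
             * w ((S - (N - U)) \<union> ((N - U) - S)))"
        using UN NU c2 unfolding N_def by (simp add: hodge_def grade_def clifford_def)
      have R: "grade (2*m) (clifford (4*m) v (hodge (4*m) w)) U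
        = (\<Sum>S\<in>Pow N. cl_sign S ((S - U) \<union> (U - S)) * v S * hodge (4*m) w ((S - U) \<union> (U - S)))"
        using UN True unfolding N_def by (simp add: grade_def clifford_def)
      have trm: "cl_sign (N - U) U * (cl_sign S ((S - (N - U)) \<union> ((N - U) - S)) * v S
             * w ((S - (N - U)) \<union> ((N - U) - S)))
           = cl_sign S ((S - U) \<union> (U - S)) * v S * hodge (4*m) w ((S - U) \<union> (U - S))"
        if SN: "S \<in> Pow N" for S
      proof -
        define T where "T = (S - (N - U)) \<union> ((N - U) - S)"
        have TN: "T \<subseteq> N" and SN': "S \<subseteq> N" using SN UN unfolding T_def by auto
        have D: "(S - U) \<union> (U - S) = N - T" using SN' UN unfolding T_def by auto
        have DN: "N - T \<subseteq> N" by auto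
        have NNT: "N - (N - T) = T" using TN by auto
        have hw': "hodge (4*m) w (N - T) = cl_sign T (N - T) * w T"
          using DN NNT unfolding N_def by (simp add: hodge_def)
        show ?thesis
        proof (cases "v S = 0 \<or> w T = 0")
          case True then show ?thesis unfolding T_def[symmetric] D hw' by auto
        next
          case False
          have cS: "card S = 2*m" using hv False unfolding homogeneous_def by auto
          have cT: "card T = 2*m" using hw False unfolding homogeneous_def by auto
          have ST: "(S - T) \<union> (T - S) = N - U" using SN' UN unfolding T_def by auto
          have NNU: "N - (N - U) = U" using UN by auto
          have sk: "cl_sign (N - U) U * cl_sign S T = cl_sign S (N - T) * cl_sign T (N - T)"
            using sign_key[OF fN SN' TN] cS cT c2 unfolding ST NNU by simp
          show ?thesis unfolding T_def[symmetric] D hw'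
            using sk by (simp add: algebra_simps)
        qed
      qed
      show ?thesis unfolding L R sum_distrib_left
        by (rule sum.cong) (use trm in auto)
    qed
  qed
qed


lemma hodge_hodge:
  assumes hv: "homogeneous (4*m) (2*m) v"
  shows "hodge (4*m) (hodge (4*m) v) = v"
proof (rule ext)
  fix U
  define N where "N = {..<4*m}"
  have fN: "finite N" and cN: "card N = 4*m" unfolding N_def by auto
  show "hodge (4*m) (hodge (4*m) v) U = v U"
  proof (cases "U \<subseteq> N")
    case False
    then have "v U = 0" using hv unfolding homogeneous_def is_mvec_def N_def by auto
    then show ?thesis using False by (simp add: hodge_def N_def)
  next
    case UN: True
    have NNU: "N - (N - U) = U" using UN by auto
    have e: "hodge (4*m) (hodge (4*m) v) U = cl_sign (N - U) U * (cl_sign U (N - U) * v U)"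
      using UN NNU unfolding N_def by (simp add: hodge_def)
    show ?thesis
    proof (cases "v U = 0")
      case True then show ?thesis unfolding e by simp
    next
      case False
      then have cU: "card U = 2*m" using hv unfolding homogeneous_def by auto
      have cNU: "card (N - U) = 2*m" using UN fN cN cU by (simp add: card_Diff_subset finite_subset)
      have "ninv (N - U) U + ninv U (N - U) + card ((N - U) \<inter> U) = card (N - U) * card U"
        by (rule ninv_pair) (use fN UN finite_subset in auto)
      moreover have "(N - U) \<inter> U = {}" by auto
      ultimately have "ninv (N - U) U + ninv U (N - U) = 2*m * (2*m)" using cU cNU by simp
      then have "even (ninv (N - U) U + ninv U (N - U))" by simp
      then have "cl_sign (N - U) U * cl_sign U (N - U) = 1"
        unfolding cl_sign_ninv power_add[symmetric] by simp
      then show ?thesis unfolding e by (simp add: mult.assoc[symmetric])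
    qed
  qed
qed

lemma hodge_vol:
  assumes hv: "homogeneous (4*m) (2*m) v"
  shows "clifford (4*m) v (\<lambda>S. if S = {..<4*m} then 1 else 0) = (\<lambda>U. (-1)^m * hodge (4*m) v U)"
proof (rule ext)
  fix U
  define N where "N = {..<4*m}"
  have fN: "finite N" and cN: "card N = 4*m" unfolding N_def by auto
  show "clifford (4*m) v (\<lambda>S. if S = {..<4*m} then 1 else 0) U = (-1)^m * hodge (4*m) v U"
  proof (cases "U \<subseteq> N")
    case False then show ?thesis by (simp add: hodge_def clifford_def N_def)
  next
    case UN: True
    have "clifford (4*m) v (\<lambda>S. if S = {..<4*m} then 1 else 0) U
       = (\<Sum>S\<in>Pow N. if S = N - U then cl_sign (N - U) N * v (N - U) else 0)"
      unfolding clifford_def N_def[symmetric] using UN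
      apply simp
      apply (rule sum.cong, simp)
      apply (auto simp: N_def)
      done
    also have "\<dots> = cl_sign (N - U) N * v (N - U)" using fN by (simp add: sum.delta')
    finally have e1: "clifford (4*m) v (\<lambda>S. if S = {..<4*m} then 1 else 0) U = cl_sign (N - U) N * v (N - U)" .
    have e2: "hodge (4*m) v U = cl_sign (N - U) U * v (N - U)" using UN unfolding N_def by (simp add: hodge_def)
    show ?thesis
    proof (cases "v (N - U) = 0")
      case True then show ?thesis unfolding e1 e2 by simp
    next
      case False
      then have cA: "card (N - U) = 2*m" using hv unfolding homogeneous_def by auto
      have fA: "finite (N - U)" using fN by auto
      have "N = (N - U) \<union> U" using UN by auto
      moreover have "finite U" using fN UN finite_subset by auto
      ultimately have "ninv (N - U) N = ninv (N - U) (N - U) + ninv (N - U) U"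
        using ninv_Un2[of "N - U" "N - U" U] fA by auto
      moreover have "2 * ninv (N - U) (N - U) + card (N - U) = card (N - U) * card (N - U)"
        using ninv_pair[OF fA fA] by simp
      ultimately have h1: "ninv (N - U) N = ninv (N - U) (N - U) + ninv (N - U) U"
         and h2: "ninv (N - U) (N - U) + m = 2 * (m * m)" using cA by (simp_all add: algebra_simps)
      have eq: "ninv (N - U) N + (m + ninv (N - U) U) = 2 * (m * m + ninv (N - U) U)"
        unfolding distrib_left using h1 h2 by linarith
      have "even (ninv (N - U) N + (m + ninv (N - U) U))" unfolding eq by simp
      then have "cl_sign (N - U) N = (-1)^m * cl_sign (N - U) U"
        unfolding cl_sign_ninv power_add[symmetric] by (rule neg1_eq)
      then show ?thesis unfolding e1 e2 by simp
    qed
  qed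
qed

lemma grade_hodge:
  assumes hv: "homogeneous (4*m) (2*m) v"
  shows "grade (2*m) (hodge (4*m) v) = hodge (4*m) v"
proof (rule ext)
  fix U
  show "grade (2*m) (hodge (4*m) v) U = hodge (4*m) v U"
  proof (cases "U \<subseteq> {..<4*m} \<and> v ({..<4*m} - U) \<noteq> 0")
    case True
    then have "card ({..<4*m} - U) = 2*m" using hv unfolding homogeneous_def by auto
    moreover have "finite U" using True finite_subset[of U "{..<4*m}"] by auto
    moreover have "card ({..<4*m} - U) = 4*m - card U" using True calculation by (simp add: card_Diff_subset)
    moreover have "card U \<le> 4*m" using True card_mono[of "{..<4*m}" U] by auto
    ultimately have "card U = 2*m" by linarith
    then show ?thesis by (simp add: grade_def)
  next
    case False then show ?thesis by (auto simp: grade_def hodge_def)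
  qed
qed



lemma hodge_lin: "hodge n (\<lambda>S. r * x S + t * y S) = (\<lambda>S. r * hodge n x S + t * hodge n y S)"
  by (auto simp: hodge_def algebra_simps fun_eq_iff)

lemma hodge_neg: "hodge n (\<lambda>S. - x S) = (\<lambda>S. - hodge n x S)"
  by (auto simp: hodge_def fun_eq_iff)

lemma clifford_neg: "clifford n x (\<lambda>S. - y S) = (\<lambda>S. - clifford n x y S)"
  by (auto simp: clifford_def fun_eq_iff sum_negf[symmetric])

lemma grade_neg: "grade k (\<lambda>S. - y S) = (\<lambda>S. - grade k y S)"
  by (auto simp: grade_def fun_eq_iff)

lemma grade_scale: "grade k (\<lambda>S. r * y S) = (\<lambda>S. r * grade k y S)"
  by (auto simp: grade_def fun_eq_iff)

theorem lemma7p5: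
  fixes m :: nat
    and Hk :: "nat \<Rightarrow> 'h::real_algebra_1 set"
    and \<Phi> :: "'h \<Rightarrow> mvec"
  assumes M: "closed_oriented_manifold_cohomology (4 * m) Hk"
    and Phi: "graded_alg_embedding (4 * m) Hk \<Phi>"
    and cl: "\<forall>a b. \<exists>c. \<Phi> c = clifford (4 * m) (\<Phi> a) (\<Phi> b)"
  defines "\<Lambda> \<equiv> \<Phi> ` Hk (2 * m)"
    and "\<Lambda>p \<equiv> {v \<in> \<Phi> ` Hk (2 * m). hodge (4 * m) v = v}"
    and "\<Lambda>n \<equiv> {v \<in> \<Phi> ` Hk (2 * m). hodge (4 * m) v = (\<lambda>S. - v S)}"
  shows "(\<forall>v\<in>\<Lambda>. hodge (4 * m) v \<in> \<Lambda>)
       \<and> (\<forall>v\<in>\<Lambda>. \<exists>p\<in>\<Lambda>p. \<exists>q\<in>\<Lambda>n. v = (\<lambda>S. p S + q S))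
       \<and> \<Lambda>p \<inter> \<Lambda>n = {(\<lambda>S. 0)}
       \<and> (\<forall>v\<in>\<Lambda>p. \<forall>v'\<in>\<Lambda>p. grade (2 * m) (clifford (4 * m) v v') \<in> \<Lambda>p)
       \<and> (\<forall>v\<in>\<Lambda>n. \<forall>v'\<in>\<Lambda>n. grade (2 * m) (clifford (4 * m) v v') \<in> \<Lambda>n)"
proof -
  have add: "\<And>a b. \<Phi> (a + b) = (\<lambda>S. \<Phi> a S + \<Phi> b S)"
    and scale: "\<And>r a. \<Phi> (r *\<^sub>R a) = (\<lambda>S. r * \<Phi> a S)"
    and injP: "inj \<Phi>"
    and homP: "\<And>k a. a \<in> Hk k \<Longrightarrow> homogeneous (4*m) k (\<Phi> a)"
    using Phi unfolding graded_alg_embedding_def by auto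
  have sub: "\<And>k. subspace (Hk k)"
    and dec: "\<And>h. \<exists>c. (\<forall>k. c k \<in> Hk k) \<and> h = (\<Sum>k\<le>4*m. c k)"
    and dimn: "dim (Hk (4*m)) = 1"
    using M unfolding closed_oriented_manifold_cohomology_def by auto
  have Phi0: "\<Phi> 0 = (\<lambda>S. 0)" using scale[of 0 0] by simp
  have Phisum: "\<Phi> (\<Sum>j\<in>J. f j) = (\<lambda>S. \<Sum>j\<in>J. \<Phi> (f j) S)" if "finite J" for J and f :: "nat \<Rightarrow> 'h"
    using that by (induction J rule: finite_induct) (auto simp: Phi0 add)
  have gradePhi: "\<exists>d\<in>Hk (2*m). \<Phi> d = grade (2*m) (\<Phi> c)" for c
  proof -
    obtain cc where cc: "\<And>k. cc k \<in> Hk k" and ceq: "c = (\<Sum>k\<le>4*m. cc k)" using dec by blast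
    have "\<Phi> (cc (2*m)) = grade (2*m) (\<Phi> c)"
    proof (rule ext)
      fix S
      show "\<Phi> (cc (2*m)) S = grade (2*m) (\<Phi> c) S"
      proof (cases "card S = 2*m")
        case True
        have "(\<Sum>k\<le>4*m. \<Phi> (cc k) S) = \<Phi> (cc (2*m)) S + (\<Sum>k\<in>{..4*m} - {2*m}. \<Phi> (cc k) S)"
          by (subst sum.remove[of _ "2*m"]) auto
        also have "(\<Sum>k\<in>{..4*m} - {2*m}. \<Phi> (cc k) S) = 0"
          by (rule sum.neutral) (use homP[OF cc] True in \<open>auto simp: homogeneous_def\<close>)
        finally show ?thesis using True unfolding ceq Phisum[OF finite_atMost] by (simp add: grade_def)
      next
        case False
        then show ?thesis using homP[OF cc, of "2*m"] by (auto simp: grade_def homogeneous_def)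
      qed
    qed
    then show ?thesis using cc by blast
  qed
  have homL: "\<And>v. v \<in> \<Lambda> \<Longrightarrow> homogeneous (4*m) (2*m) v" unfolding \<Lambda>_def using homP by auto
  define vol :: mvec where "vol = (\<lambda>S. if S = {..<4*m} then 1 else 0)"
  have vol: "\<exists>a. \<Phi> a = vol"
  proof -
    have "\<not> Hk (4*m) \<subseteq> {0}"
    proof
      assume "Hk (4*m) \<subseteq> {0}"
      then have "Hk (4*m) \<subseteq> span {}" by (simp add: span_empty)
      then have "dim (Hk (4*m)) \<le> card ({}::'h set)" using dim_le_card[of "Hk (4*m)" "{}"] by simp
      then show False using dimn by simp
    qed
    then obtain a where aH: "a \<in> Hk (4*m)" and a0: "a \<noteq> 0" by auto
    have "\<Phi> a \<noteq> (\<lambda>S. 0)"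
    proof
      assume "\<Phi> a = (\<lambda>S. 0)"
      then have "\<Phi> a = \<Phi> 0" using Phi0 by simp
      then have "a = 0" by (rule injD[OF injP])
      then show False using a0 by simp
    qed
    then obtain S where S: "\<Phi> a S \<noteq> 0" by auto
    have supp: "\<And>S. \<Phi> a S \<noteq> 0 \<Longrightarrow> S = {..<4*m}"
    proof -
      fix S assume "\<Phi> a S \<noteq> 0"
      then have "S \<subseteq> {..<4*m}" "card S = 4*m" using homP[OF aH] unfolding homogeneous_def is_mvec_def by auto
      then show "S = {..<4*m}" using card_subset_eq[of "{..<4*m}" S] by auto
    qed
    define r where "r = \<Phi> a {..<4*m}"
    have r0: "r \<noteq> 0" using S supp r_def by auto
    have "\<Phi> ((1/r) *\<^sub>R a) = vol"
      unfolding scale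
    proof (rule ext)
      fix S
      show "1 / r * \<Phi> a S = vol S"
      proof (cases "S = {..<4*m}")
        case True then show ?thesis unfolding vol_def using r0 r_def by simp
      next
        case False
        then have "\<Phi> a S = 0" using supp by blast
        then show ?thesis using False unfolding vol_def by simp
      qed
    qed
    then show ?thesis by blast
  qed
  have hodgeL: "hodge (4*m) v \<in> \<Lambda>" if vL: "v \<in> \<Lambda>" for v
  proof -
    obtain a where v: "v = \<Phi> a" using vL unfolding \<Lambda>_def by auto
    obtain av where av: "\<Phi> av = vol" using vol by blast
    obtain c where c: "\<Phi> c = clifford (4*m) v vol" using cl[rule_format, of a av] v av by auto
    obtain d where dH: "d \<in> Hk (2*m)" and d: "\<Phi> d = grade (2*m) (\<Phi> c)" using gradePhi by blast
    have hv: "homogeneous (4*m) (2*m) v" using homL vL by auto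
    have "hodge (4*m) v = (\<lambda>U. (-1)^m * clifford (4*m) v vol U)"
      unfolding vol_def hodge_vol[OF hv] by (simp add: fun_eq_iff)
    then have "hodge (4*m) v = grade (2*m) (\<lambda>U. (-1)^m * clifford (4*m) v vol U)"
      using grade_hodge[OF hv] by simp
    also have "\<dots> = \<Phi> (((-1)^m) *\<^sub>R d)" unfolding grade_scale scale d c ..
    finally show ?thesis unfolding \<Lambda>_def using subspace_scale[OF sub dH] by blast
  qed
  have P1: "\<forall>v\<in>\<Lambda>. hodge (4 * m) v \<in> \<Lambda>" using hodgeL by blast
  have P2: "\<forall>v\<in>\<Lambda>. \<exists>p\<in>\<Lambda>p. \<exists>q\<in>\<Lambda>n. v = (\<lambda>S. p S + q S)"
  proof
    fix v assume vL: "v \<in> \<Lambda>"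
    obtain a where aH: "a \<in> Hk (2*m)" and v: "v = \<Phi> a" using vL unfolding \<Lambda>_def by auto
    obtain b where bH: "b \<in> Hk (2*m)" and hv: "hodge (4*m) v = \<Phi> b" using hodgeL[OF vL] unfolding \<Lambda>_def by auto
    have hh: "hodge (4*m) (hodge (4*m) v) = v" using hodge_hodge[OF homL[OF vL]] .
    define p where "p = (\<lambda>S. (1/2) * v S + (1/2) * hodge (4*m) v S)"
    define q where "q = (\<lambda>S. (1/2) * v S + (-1/2) * hodge (4*m) v S)"
    have pP: "p = \<Phi> ((1/2) *\<^sub>R a + (1/2) *\<^sub>R b)" unfolding p_def add scale v[symmetric] hv ..
    have qP: "q = \<Phi> ((1/2) *\<^sub>R a + (-1/2) *\<^sub>R b)" unfolding q_def add scale v[symmetric] hv ..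
    have "(1/2) *\<^sub>R a + (1/2) *\<^sub>R b \<in> Hk (2*m)" "(1/2) *\<^sub>R a + (-1/2) *\<^sub>R b \<in> Hk (2*m)"
      by (rule subspace_add[OF sub subspace_scale[OF sub aH] subspace_scale[OF sub bH]])+
    moreover have "hodge (4*m) p = p" unfolding p_def hodge_lin hh by (auto simp: fun_eq_iff)
    moreover have "hodge (4*m) q = (\<lambda>S. - q S)" unfolding q_def hodge_lin hh by (auto simp: fun_eq_iff)
    ultimately have "p \<in> \<Lambda>p" "q \<in> \<Lambda>n" unfolding \<Lambda>p_def \<Lambda>n_def using pP qP by auto
    moreover have "v = (\<lambda>S. p S + q S)" unfolding p_def q_def by (auto simp: fun_eq_iff)
    ultimately show "\<exists>p\<in>\<Lambda>p. \<exists>q\<in>\<Lambda>n. v = (\<lambda>S. p S + q S)" by blast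
  qed
  have P3: "\<Lambda>p \<inter> \<Lambda>n = {(\<lambda>S. 0)}"
  proof
    show "\<Lambda>p \<inter> \<Lambda>n \<subseteq> {(\<lambda>S. 0)}"
    proof
      fix v assume "v \<in> \<Lambda>p \<inter> \<Lambda>n"
      then have "v = (\<lambda>S. - v S)" unfolding \<Lambda>p_def \<Lambda>n_def by auto
      then have "\<And>S. v S = - v S" by (metis)
      then have "v = (\<lambda>S. 0)" by (simp add: fun_eq_iff)
      then show "v \<in> {(\<lambda>S. 0)}" by simp
    qed
    have z: "0 \<in> Hk (2*m)" by (rule subspace_0[OF sub])
    have h0: "hodge (4*m) (\<lambda>S. 0) = (\<lambda>S. 0)" by (auto simp: hodge_def fun_eq_iff)
    have "(\<lambda>S. 0) \<in> \<Phi> ` Hk (2*m)" using Phi0 z by (metis image_eqI)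
    then show "{(\<lambda>S. 0)} \<subseteq> \<Lambda>p \<inter> \<Lambda>n" unfolding \<Lambda>p_def \<Lambda>n_def using h0 by auto
  qed
  have prodL: "\<exists>d\<in>Hk (2*m). \<Phi> d = grade (2*m) (clifford (4*m) v v')" if vL1: "v \<in> \<Lambda>" and vL2: "v' \<in> \<Lambda>" for v v'
  proof -
    obtain a where "v = \<Phi> a" using vL1 unfolding \<Lambda>_def by (rule imageE)
    moreover obtain a' where "v' = \<Phi> a'" using vL2 unfolding \<Lambda>_def by (rule imageE)
    ultimately obtain c where "\<Phi> c = clifford (4*m) v v'" using cl[rule_format, of a a'] by auto
    then show ?thesis using gradePhi[of c] by auto
  qed
  have P4: "\<forall>v\<in>\<Lambda>p. \<forall>v'\<in>\<Lambda>p. grade (2 * m) (clifford (4 * m) v v') \<in> \<Lambda>p"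
  proof (intro ballI)
    fix v v' assume a: "v \<in> \<Lambda>p" "v' \<in> \<Lambda>p"
    then have L: "v \<in> \<Lambda>" "v' \<in> \<Lambda>" and h: "hodge (4*m) v' = v'" unfolding \<Lambda>p_def \<Lambda>_def by auto
    have "hodge (4*m) (grade (2*m) (clifford (4*m) v v')) = grade (2*m) (clifford (4*m) v v')"
      using key[OF homL[OF L(1)] homL[OF L(2)]] h by simp
    moreover obtain d where "d \<in> Hk (2*m)" "\<Phi> d = grade (2*m) (clifford (4*m) v v')" using prodL[OF L] by blast
    then have "grade (2*m) (clifford (4*m) v v') \<in> \<Phi> ` Hk (2*m)" by (metis image_eqI)
    ultimately show "grade (2 * m) (clifford (4 * m) v v') \<in> \<Lambda>p"
      unfolding \<Lambda>p_def by blast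
  qed
  have P5: "\<forall>v\<in>\<Lambda>n. \<forall>v'\<in>\<Lambda>n. grade (2 * m) (clifford (4 * m) v v') \<in> \<Lambda>n"
  proof (intro ballI)
    fix v v' assume a: "v \<in> \<Lambda>n" "v' \<in> \<Lambda>n"
    then have L: "v \<in> \<Lambda>" "v' \<in> \<Lambda>" and h: "hodge (4*m) v' = (\<lambda>S. - v' S)" unfolding \<Lambda>n_def \<Lambda>_def by auto
    have "hodge (4*m) (grade (2*m) (clifford (4*m) v v')) = (\<lambda>S. - grade (2*m) (clifford (4*m) v v') S)"
      using key[OF homL[OF L(1)] homL[OF L(2)]] h by (simp add: clifford_neg grade_neg)
    moreover obtain d where "d \<in> Hk (2*m)" "\<Phi> d = grade (2*m) (clifford (4*m) v v')" using prodL[OF L] by blast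
    then have "grade (2*m) (clifford (4*m) v v') \<in> \<Phi> ` Hk (2*m)" by (metis image_eqI)
    ultimately show "grade (2 * m) (clifford (4 * m) v v') \<in> \<Lambda>n"
      unfolding \<Lambda>n_def by blast
  qed
  show ?thesis using P1 P2 P3 P4 P5 by blast
qed

end
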